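(* Let $d\ge3$, $\beta>0$, $g:\mathbb{R}^d\to\mathbb{R}$ Lipschitz. There are positive constants $C_1,C_2$ depending only on $d,\beta,g$ such that for any $\varepsilon>0$, $t\in\mathbb{Z}_{\ge0}$ and $x,y\in\mathbb{Z}^d$, \[ |G_\varepsilon(t,x)-G_\varepsilon(t,y)|\le C_1\varepsilon|x-y|e^{C_2(\varepsilon|x|+\varepsilon|y|+\varepsilon^2t)}. \]
   Context: $\{S_n\}_{n\ge0}$ is simple symmetric random walk on $\mathbb{Z}^d$ started at the origin; $g_\varepsilon(x)=g(\varepsilon x)$ and $G_\varepsilon(t,x)=\mathbb{E}(e^{\beta g_\varepsilon(S_t+x)})$ for $t\in\mathbb{Z}_{\ge0}$, $x\in\mathbb{Z}^d$. *)

theory Defs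
  imports "HOL-Probability.Probability"
begin

text \<open>The lattice Z^d is modelled as int ^ 'd for a finite index type 'd (d = CARD('d)).\<close>

definition lat_emb :: "int ^ 'd \<Rightarrow> real ^ 'd" where
  "lat_emb x = (\<chi> i. real_of_int (x $ i))"

definition rw_steps :: "(int ^ 'd) set" where
  "rw_steps = {(\<chi> j. if j = i then s else 0) | i s. s \<in> {-1, 1::int}}"

primrec rw_pmf :: "nat \<Rightarrow> (int ^ 'd::finite) pmf" where
  "rw_pmf 0 = return_pmf 0"
| "rw_pmf (Suc t) = bind_pmf (rw_pmf t) (\<lambda>s. map_pmf (\<lambda>e. s + e) (pmf_of_set rw_steps))"

definition G_eps :: "(real ^ 'd \<Rightarrow> real) \<Rightarrow> real \<Rightarrow> real \<Rightarrow> nat \<Rightarrow> int ^ 'd::finite \<Rightarrow> real" where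
  "G_eps g \<beta> \<epsilon> t x =
     measure_pmf.expectation (rw_pmf t) (\<lambda>s. exp (\<beta> * g (\<epsilon> *\<^sub>R lat_emb (s + x))))"

end

theory Submission
  imports Defs "HOL-Probability.Hoeffding"
begin

lemma cosh_le_exp_sq:
  fixes x :: real assumes "x \<ge> 0" shows "cosh x \<le> exp (x^2/2)"
proof -
  have h: "-(2*x)*(1/2) + ln (1 + (1/2)*(exp (2*x) - 1)) \<le> (2*x)^2/8"
    using Hoeffdings_lemma_aux[of "2*x" "1/2"] assms by simp
  have pos: "1 + (1/2)*(exp (2*x) - 1) > 0"
    apply (simp add: field_simps) by (metis add_pos_pos exp_gt_zero zero_less_one)
  have c: "cosh x = exp (-x) * (1 + (1/2)*(exp (2*x) - 1))"
    by (simp add: cosh_field_def exp_minus field_simps) (metis exp_add mult_2_right)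
  have "ln (cosh x) = -x + ln (1 + (1/2)*(exp (2*x) - 1))"
    unfolding c using pos by (simp add: ln_mult)
  with h have "ln (cosh x) \<le> x^2/2" by (simp add: power2_eq_square)
  then show ?thesis
    by (metis cosh_real_pos exp_le_cancel_iff exp_ln)
qed

lemma rw_steps_eq: "(rw_steps :: (int^'d::finite) set) = (\<lambda>(i,s). \<chi> j. if j = i then s else 0) ` (UNIV \<times> {-1,1::int})"
  unfolding rw_steps_def by auto

lemma rw_steps_finite: "finite (rw_steps :: (int^'d::finite) set)"
  unfolding rw_steps_eq by simp

lemma rw_steps_ne: "(rw_steps :: (int^'d::finite) set) \<noteq> {}"
  unfolding rw_steps_eq by simp

lemma rw_steps_comp: "e \<in> (rw_steps :: (int^'d::finite) set) \<Longrightarrow> e $ i \<in> {-1,0,1}"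
  unfolding rw_steps_def by auto

lemma rw_steps_uminus: "e \<in> (rw_steps :: (int^'d::finite) set) \<Longrightarrow> - e \<in> rw_steps"
  unfolding rw_steps_def
  apply clarify
  subgoal for i s
    apply (rule exI[of _ i], rule exI[of _ "-s"])
    by (auto simp: vec_eq_iff)
  done

lemma finite_set_rw: "finite (set_pmf (rw_pmf t :: (int^'d::finite) pmf))"
  by (induction t) (auto simp: set_pmf_of_set[OF rw_steps_ne rw_steps_finite] rw_steps_finite)

definition phi :: "real \<Rightarrow> int^'d::finite \<Rightarrow> real" where
  "phi \<mu> s = (\<Sum>i\<in>UNIV. cosh (\<mu> * of_int (s$i)))"

lemma phi_nonneg: "phi \<mu> s \<ge> 0"
  unfolding phi_def by (intro sum_nonneg) simp

lemma phi_step: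
  assumes "e \<in> rw_steps"
  shows "phi \<mu> (s+e) + phi \<mu> (s-e) \<le> 2 * cosh \<mu> * phi \<mu> s"
proof -
  have "phi \<mu> (s+e) + phi \<mu> (s-e) = (\<Sum>i\<in>UNIV. 2 * cosh (\<mu> * of_int (s$i)) * cosh (\<mu> * of_int (e$i)))"
    unfolding phi_def sum.distrib[symmetric]
    by (intro sum.cong refl) (simp add: distrib_left right_diff_distrib cosh_add cosh_diff)
  also have "\<dots> \<le> (\<Sum>i\<in>UNIV. 2 * cosh \<mu> * cosh (\<mu> * of_int (s$i)))"
  proof (intro sum_mono)
    fix i
    have "cosh (\<mu> * of_int (e$i)) \<le> cosh \<mu>"
      using rw_steps_comp[OF assms, of i] cosh_real_ge_1[of \<mu>] by auto
    then show "2 * cosh (\<mu> * of_int (s$i)) * cosh (\<mu> * of_int (e$i)) \<le> 2 * cosh \<mu> * cosh (\<mu> * of_int (s$i))"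
      by (simp add: mult_left_mono)
  qed
  also have "\<dots> = 2 * cosh \<mu> * phi \<mu> s"
    unfolding phi_def by (simp add: sum_distrib_left)
  finally show ?thesis .
qed

lemma phi_avg:
  "(\<Sum>e\<in>rw_steps. phi \<mu> (s+e)) \<le> real (card (rw_steps :: (int^'d::finite) set)) * (cosh \<mu> * phi \<mu> (s::int^'d))"
proof -
  have eq: "(\<Sum>e\<in>rw_steps. phi \<mu> (s+e)) = (\<Sum>e\<in>(rw_steps :: (int^'d) set). phi \<mu> (s-e))"
    by (rule sum.reindex_bij_witness[of _ uminus uminus]) (auto simp: rw_steps_uminus)
  have "2 * (\<Sum>e\<in>rw_steps. phi \<mu> (s+e)) = (\<Sum>e\<in>(rw_steps :: (int^'d) set). phi \<mu> (s+e) + phi \<mu> (s-e))"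
    by (simp add: sum.distrib eq[symmetric])
  also have "\<dots> \<le> (\<Sum>e\<in>(rw_steps :: (int^'d) set). 2 * cosh \<mu> * phi \<mu> s)"
    by (intro sum_mono phi_step)
  also have "\<dots> = 2 * (real (card (rw_steps :: (int^'d) set)) * (cosh \<mu> * phi \<mu> s))"
    by simp
  finally show ?thesis by simp
qed

lemma phi_nn:
  "(\<integral>\<^sup>+s. ennreal (phi \<mu> s) \<partial>measure_pmf (rw_pmf t :: (int^'d::finite) pmf))
     \<le> ennreal (real CARD('d) * cosh \<mu> ^ t)"
proof (induction t)
  case 0
  have "phi \<mu> (0::int^'d) = real CARD('d)" unfolding phi_def by simp
  then show ?case by (simp add: phi_nonneg)
next
  case (Suc t)
  define R where "R = (rw_steps :: (int^'d) set)"
  have Rf1: "finite R" unfolding R_def by (rule rw_steps_finite)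
  have Rf2: "R \<noteq> {}" unfolding R_def by (rule rw_steps_ne)
  have Rf3: "card R > 0" using Rf1 Rf2 by (simp add: card_gt_0_iff)
  note Rf = Rf1 Rf2 Rf3
  have inner: "(\<integral>\<^sup>+e. ennreal (phi \<mu> (s+e)) \<partial>measure_pmf (pmf_of_set R))
       \<le> ennreal (cosh \<mu>) * ennreal (phi \<mu> s)" for s :: "int^'d"
  proof -
    have "(\<integral>\<^sup>+e. ennreal (phi \<mu> (s+e)) \<partial>measure_pmf (pmf_of_set R))
        = ennreal (\<integral>e. phi \<mu> (s+e) \<partial>measure_pmf (pmf_of_set R))"
      by (intro nn_integral_eq_integral integrable_measure_pmf_finite) (auto simp: Rf phi_nonneg)
    also have "(\<integral>e. phi \<mu> (s+e) \<partial>measure_pmf (pmf_of_set R)) = (\<Sum>e\<in>R. phi \<mu> (s+e)) / card R"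
      using Rf by (simp add: integral_pmf_of_set)
    also have "\<dots> \<le> cosh \<mu> * phi \<mu> s"
      using phi_avg[of \<mu> s] Rf unfolding R_def by (simp add: divide_le_eq mult.commute)
    finally show ?thesis
      by (simp add: ennreal_mult' ennreal_leI)
  qed
  have "(\<integral>\<^sup>+s. ennreal (phi \<mu> s) \<partial>measure_pmf (rw_pmf (Suc t) :: (int^'d) pmf))
     = (\<integral>\<^sup>+s. (\<integral>\<^sup>+e. ennreal (phi \<mu> (s+e)) \<partial>measure_pmf (pmf_of_set R)) \<partial>measure_pmf (rw_pmf t :: (int^'d) pmf))"
    by (simp add: R_def)
  also have "\<dots> \<le> (\<integral>\<^sup>+s. ennreal (cosh \<mu>) * ennreal (phi \<mu> s) \<partial>measure_pmf (rw_pmf t :: (int^'d) pmf))"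
    by (intro nn_integral_mono inner)
  also have "\<dots> = ennreal (cosh \<mu>) * (\<integral>\<^sup>+s. ennreal (phi \<mu> s) \<partial>measure_pmf (rw_pmf t :: (int^'d) pmf))"
    by (simp add: nn_integral_cmult)
  also have "\<dots> \<le> ennreal (cosh \<mu>) * ennreal (real CARD('d) * cosh \<mu> ^ t)"
    by (intro mult_left_mono Suc) auto
  also have "\<dots> = ennreal (real CARD('d) * cosh \<mu> ^ Suc t)"
    by (simp add: ennreal_mult'[symmetric] mult_ac)
  finally show ?case .
qed

lemma phi_int:
  "measure_pmf.expectation (rw_pmf t :: (int^'d::finite) pmf) (phi \<mu>) \<le> real CARD('d) * cosh \<mu> ^ t"
proof -
  have "ennreal (measure_pmf.expectation (rw_pmf t :: (int^'d::finite) pmf) (phi \<mu>))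
     = (\<integral>\<^sup>+s. ennreal (phi \<mu> s) \<partial>measure_pmf (rw_pmf t :: (int^'d::finite) pmf))"
    by (intro nn_integral_eq_integral[symmetric] integrable_measure_pmf_finite finite_set_rw)
       (auto simp: phi_nonneg)
  also have "\<dots> \<le> ennreal (real CARD('d) * cosh \<mu> ^ t)" by (rule phi_nn)
  finally show ?thesis
    by (subst (asm) ennreal_le_iff) auto
qed

lemma exp_norm_le_phi:
  fixes s :: "int^'d::finite" assumes "lam \<ge> 0"
  shows "exp (lam * norm (lat_emb s)) \<le> 2 * phi (lam * real CARD('d)) s"
proof -
  define f where "f j = \<bar>real_of_int (s$j)\<bar>" for j
  have "Max (range f) \<in> range f" by (intro Max_in) auto
  then obtain i where i: "f i = Max (range f)" by (metis imageE)
  have fi: "f j \<le> f i" for j unfolding i by (intro Max_ge) auto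
  have "norm (lat_emb s) \<le> (\<Sum>j\<in>UNIV. f j)"
    using norm_le_l1_cart[of "lat_emb s"] by (simp add: lat_emb_def f_def)
  also have "\<dots> \<le> real CARD('d) * f i"
    using sum_bounded_above[of UNIV f "f i"] fi by simp
  finally have "lam * norm (lat_emb s) \<le> \<bar>lam * real CARD('d) * real_of_int (s$i)\<bar>"
    using assms by (simp add: f_def abs_mult mult_left_mono mult.assoc)
  then have "exp (lam * norm (lat_emb s)) \<le> exp \<bar>lam * real CARD('d) * real_of_int (s$i)\<bar>"
    by simp
  also have "\<dots> \<le> 2 * cosh (lam * real CARD('d) * real_of_int (s$i))"
    by (cases "lam * real CARD('d) * real_of_int (s$i) \<ge> 0")
       (auto simp: cosh_field_def exp_minus)
  also have "\<dots> \<le> 2 * phi (lam * real CARD('d)) s"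
    unfolding phi_def by (intro mult_left_mono member_le_sum) auto
  finally show ?thesis .
qed

lemma exp_diff_bound: "\<bar>exp a - exp b\<bar> \<le> \<bar>a - b\<bar> * (exp a + exp (b::real))"
proof -
  have 1: "exp a - exp b \<le> exp a * (a - b)" for a b :: real
  proof -
    have "exp b = exp a * exp (b - a)" by (simp add: exp_diff)
    also have "\<dots> \<ge> exp a * (1 + (b - a))"
      by (intro mult_left_mono exp_ge_add_one_self) auto
    finally show ?thesis by (simp add: algebra_simps)
  qed
  have "exp a * (a - b) \<le> \<bar>a - b\<bar> * (exp a + exp b)"
    by (smt (verit) exp_gt_zero mult_left_mono mult_nonneg_nonneg abs_ge_self abs_ge_zero mult.commute)
  moreover have "exp b * (b - a) \<le> \<bar>a - b\<bar> * (exp a + exp b)"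
    by (smt (verit) exp_gt_zero mult_left_mono mult_nonneg_nonneg abs_ge_self abs_ge_zero mult.commute abs_minus_commute)
  ultimately show ?thesis using 1[of a b] 1[of b a] by linarith
qed

lemma lat_emb_add: "lat_emb (a + b) = lat_emb a + lat_emb b"
  by (simp add: lat_emb_def vec_eq_iff)

lemma lat_emb_diff: "lat_emb (a - b) = lat_emb a - lat_emb b"
  by (simp add: lat_emb_def vec_eq_iff)

theorem lemma5p2:
  fixes g :: "real ^ 'd::finite \<Rightarrow> real" and \<beta> :: real
  assumes "CARD('d) \<ge> 3"
    and "\<beta> > 0"
    and "\<exists>L. lipschitz_on L UNIV g"
  shows "\<exists>C1 > 0. \<exists>C2 > 0. \<forall>\<epsilon> > 0. \<forall>(t::nat) (x::int ^ 'd) (y::int ^ 'd).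
           \<bar>G_eps g \<beta> \<epsilon> t x - G_eps g \<beta> \<epsilon> t y\<bar>
             \<le> C1 * \<epsilon> * norm (lat_emb (x - y))
                * exp (C2 * (\<epsilon> * norm (lat_emb x) + \<epsilon> * norm (lat_emb y) + \<epsilon>^2 * real t))"
proof -
  obtain L where L: "lipschitz_on L UNIV g" using assms(3) by blast
  define L' where "L' = L + 1"
  have L0: "L \<ge> 0" using L by (simp add: lipschitz_on_def)
  have L'pos: "L' > 0" using L0 by (simp add: L'_def)
  have lip: "\<bar>g u - g v\<bar> \<le> L' * norm (u - v)" for u v
  proof -
    have "\<bar>g u - g v\<bar> \<le> L * norm (u - v)"
      using L by (auto simp: lipschitz_on_def dist_norm dist_real_def)
    also have "\<dots> \<le> L' * norm (u - v)" by (intro mult_right_mono) (auto simp: L'_def)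
    finally show ?thesis .
  qed
  define lam where "lam = \<beta> * L'"
  define D where "D = real CARD('d)"
  define K where "K = exp (\<beta> * \<bar>g 0\<bar>)"
  have lampos: "lam > 0" using assms(2) L'pos by (simp add: lam_def)
  have Dpos: "D > 0" by (simp add: D_def)
  have Kpos: "K > 0" by (simp add: K_def)
  define C1 where "C1 = 4 * D * K * lam"
  define C2 where "C2 = lam + (lam * D)^2"
  have C1pos: "C1 > 0" using lampos Dpos Kpos by (simp add: C1_def)
  have C2pos: "C2 > 0" using lampos by (simp add: C2_def add_pos_nonneg)
  show ?thesis
  proof (rule exI[of _ C1], rule conjI[OF C1pos], rule exI[of _ C2], rule conjI[OF C2pos], intro allI impI)
    fix \<epsilon> :: real and t :: nat and x y :: "int^'d"
    assume \<epsilon>: "\<epsilon> > 0"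
    define M where "M = measure_pmf (rw_pmf t :: (int^'d) pmf)"
    have integ: "integrable M f" for f :: "int^'d \<Rightarrow> real"
      unfolding M_def by (intro integrable_measure_pmf_finite finite_set_rw)
    define N where "N z = norm (lat_emb z)" for z :: "int^'d"
    define F where "F z s = exp (\<beta> * g (\<epsilon> *\<^sub>R lat_emb (s + z)))" for z s :: "int^'d"
    define Exy where "Exy = exp (lam * (\<epsilon> * N x + \<epsilon> * N y))"
    define c where "c = lam * \<epsilon> * N (x - y) * (2 * K * Exy)"
    have Nnn: "N z \<ge> 0" for z by (simp add: N_def)
    have cnn: "c \<ge> 0" using lampos \<epsilon> Kpos Nnn[of "x-y"] by (simp add: c_def Exy_def)
    have Fbound: "F z s \<le> K * exp (lam * \<epsilon> * N s) * exp (lam * \<epsilon> * N z)" for z s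
    proof -
      have "g (\<epsilon> *\<^sub>R lat_emb (s + z)) \<le> \<bar>g 0\<bar> + L' * norm (\<epsilon> *\<^sub>R lat_emb (s + z))"
        using lip[of "\<epsilon> *\<^sub>R lat_emb (s + z)" 0] by simp
      also have "norm (\<epsilon> *\<^sub>R lat_emb (s + z)) \<le> \<epsilon> * (N s + N z)"
        using \<epsilon> by (simp add: lat_emb_add N_def norm_triangle_ineq)
      finally have "\<beta> * g (\<epsilon> *\<^sub>R lat_emb (s + z)) \<le> \<beta> * (\<bar>g 0\<bar> + L' * (\<epsilon> * (N s + N z)))"
        using assms(2) L'pos by (intro mult_left_mono) (auto intro: order_trans)
      also have "\<dots> = \<beta> * \<bar>g 0\<bar> + lam * \<epsilon> * N s + lam * \<epsilon> * N z"
        by (simp add: lam_def algebra_simps)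
      finally show ?thesis by (simp add: F_def K_def exp_add[symmetric])
    qed
    have pw: "\<bar>F x s - F y s\<bar> \<le> c * exp (lam * \<epsilon> * N s)" for s
    proof -
      have "\<bar>\<beta> * g (\<epsilon> *\<^sub>R lat_emb (s + x)) - \<beta> * g (\<epsilon> *\<^sub>R lat_emb (s + y))\<bar>
          = \<beta> * \<bar>g (\<epsilon> *\<^sub>R lat_emb (s + x)) - g (\<epsilon> *\<^sub>R lat_emb (s + y))\<bar>"
        using assms(2) by (simp add: abs_mult right_diff_distrib[symmetric])
      also have "\<dots> \<le> \<beta> * (L' * norm (\<epsilon> *\<^sub>R lat_emb (s + x) - \<epsilon> *\<^sub>R lat_emb (s + y)))"
        using assms(2) lip by (intro mult_left_mono) auto
      also have "\<epsilon> *\<^sub>R lat_emb (s + x) - \<epsilon> *\<^sub>R lat_emb (s + y) = \<epsilon> *\<^sub>R lat_emb (x - y)"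
        by (simp add: lat_emb_add lat_emb_diff scaleR_diff_right[symmetric])
      also have "\<beta> * (L' * norm (\<epsilon> *\<^sub>R lat_emb (x - y))) = lam * \<epsilon> * N (x - y)"
        using \<epsilon> by (simp add: lam_def N_def)
      finally have ab: "\<bar>\<beta> * g (\<epsilon> *\<^sub>R lat_emb (s + x)) - \<beta> * g (\<epsilon> *\<^sub>R lat_emb (s + y))\<bar>
          \<le> lam * \<epsilon> * N (x - y)" .
      have ex: "exp (lam * \<epsilon> * N x) \<le> Exy" and ey: "exp (lam * \<epsilon> * N y) \<le> Exy"
        unfolding Exy_def using lampos \<epsilon> Nnn[of x] Nnn[of y]
        by (simp_all add: algebra_simps)
      have k0: "K * exp (lam * \<epsilon> * N s) \<ge> 0" using Kpos by simp
      have "K * exp (lam * \<epsilon> * N s) * exp (lam * \<epsilon> * N x) \<le> K * exp (lam * \<epsilon> * N s) * Exy"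
        by (intro mult_left_mono ex k0)
      moreover have "K * exp (lam * \<epsilon> * N s) * exp (lam * \<epsilon> * N y) \<le> K * exp (lam * \<epsilon> * N s) * Exy"
        by (intro mult_left_mono ey k0)
      ultimately have "F x s + F y s \<le> 2 * (K * exp (lam * \<epsilon> * N s) * Exy)"
        using Fbound[of x s] Fbound[of y s] by linarith
      then have sum: "F x s + F y s \<le> 2 * K * Exy * exp (lam * \<epsilon> * N s)" by (simp only: mult_ac)
      have "\<bar>F x s - F y s\<bar> \<le> lam * \<epsilon> * N (x - y) * (F x s + F y s)"
        using exp_diff_bound[of "\<beta> * g (\<epsilon> *\<^sub>R lat_emb (s + x))" "\<beta> * g (\<epsilon> *\<^sub>R lat_emb (s + y))"] ab
        unfolding F_def
        by (meson add_nonneg_nonneg exp_ge_zero mult_right_mono order_trans)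
      also have "\<dots> \<le> lam * \<epsilon> * N (x - y) * (2 * K * Exy * exp (lam * \<epsilon> * N s))"
        using sum lampos \<epsilon> Nnn[of "x-y"] by (intro mult_left_mono) auto
      finally show ?thesis by (simp add: c_def mult_ac)
    qed
    have Gx: "G_eps g \<beta> \<epsilon> t z = integral\<^sup>L M (F z)" for z
      unfolding G_eps_def M_def by (intro Bochner_Integration.integral_cong refl) (simp add: F_def)
    have "\<bar>G_eps g \<beta> \<epsilon> t x - G_eps g \<beta> \<epsilon> t y\<bar> = \<bar>integral\<^sup>L M (\<lambda>s. F x s - F y s)\<bar>"
      by (simp add: Gx integral_diff integ)
    also have "\<dots> \<le> integral\<^sup>L M (\<lambda>s. \<bar>F x s - F y s\<bar>)"
      by (rule integral_abs_bound)
    also have "\<dots> \<le> integral\<^sup>L M (\<lambda>s. c * exp (lam * \<epsilon> * N s))"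
      by (intro integral_mono integ pw)
    also have "\<dots> = c * integral\<^sup>L M (\<lambda>s. exp (lam * \<epsilon> * N s))"
      by simp
    also have "integral\<^sup>L M (\<lambda>s. exp (lam * \<epsilon> * N s)) \<le> integral\<^sup>L M (\<lambda>s. 2 * phi (lam * \<epsilon> * D) s)"
      using exp_norm_le_phi[of "lam * \<epsilon>"] lampos \<epsilon>
      by (intro integral_mono integ) (auto simp: N_def D_def)
    also have "\<dots> = 2 * integral\<^sup>L M (phi (lam * \<epsilon> * D))"
      by simp
    also have "integral\<^sup>L M (phi (lam * \<epsilon> * D)) \<le> D * cosh (lam * \<epsilon> * D) ^ t"
      unfolding M_def D_def by (rule phi_int)
    also have "cosh (lam * \<epsilon> * D) ^ t \<le> exp ((lam * \<epsilon> * D)^2 / 2) ^ t"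
      using lampos \<epsilon> Dpos by (intro power_mono cosh_le_exp_sq) auto
    also have "exp ((lam * \<epsilon> * D)^2 / 2) ^ t = exp ((lam * D)^2 / 2 * (\<epsilon>^2 * real t))"
    proof -
      have "exp ((lam * \<epsilon> * D)^2 / 2) ^ t = exp (real t * ((lam * \<epsilon> * D)^2 / 2))"
        by (rule exp_of_nat_mult[symmetric])
      also have "real t * ((lam * \<epsilon> * D)^2 / 2) = (lam * D)^2 / 2 * (\<epsilon>^2 * real t)"
        by (simp only: power_mult_distrib) (simp add: algebra_simps)
      finally show ?thesis .
    qed
    finally have main: "\<bar>G_eps g \<beta> \<epsilon> t x - G_eps g \<beta> \<epsilon> t y\<bar>
        \<le> c * (2 * (D * exp ((lam * D)^2 / 2 * (\<epsilon>^2 * real t))))"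
      using cnn Dpos by (simp add: mult_left_mono)
    have "c * (2 * (D * exp ((lam * D)^2 / 2 * (\<epsilon>^2 * real t))))
        = C1 * \<epsilon> * N (x - y) * exp (lam * (\<epsilon> * N x + \<epsilon> * N y) + (lam * D)^2 / 2 * (\<epsilon>^2 * real t))"
      unfolding c_def C1_def Exy_def exp_add by (simp add: algebra_simps)
    also have "\<dots> \<le> C1 * \<epsilon> * N (x - y) * exp (C2 * (\<epsilon> * N x + \<epsilon> * N y + \<epsilon>^2 * real t))"
    proof -
      have a: "lam * (\<epsilon> * N x + \<epsilon> * N y) \<le> C2 * (\<epsilon> * N x + \<epsilon> * N y)"
        using \<epsilon> Nnn[of x] Nnn[of y] by (intro mult_right_mono) (auto simp: C2_def)
      have b: "(lam * D)^2 / 2 * (\<epsilon>^2 * real t) \<le> C2 * (\<epsilon>^2 * real t)"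
        using lampos by (intro mult_right_mono) (auto simp: C2_def)
      have "exp (lam * (\<epsilon> * N x + \<epsilon> * N y) + (lam * D)^2 / 2 * (\<epsilon>^2 * real t))
          \<le> exp (C2 * (\<epsilon> * N x + \<epsilon> * N y + \<epsilon>^2 * real t))"
        using a b by (simp add: distrib_left)
      then show ?thesis
        using C1pos \<epsilon> Nnn[of "x-y"] by (intro mult_left_mono) auto
    qed
    finally have bound: "c * (2 * (D * exp ((lam * D)^2 / 2 * (\<epsilon>^2 * real t))))
        \<le> C1 * \<epsilon> * N (x - y) * exp (C2 * (\<epsilon> * N x + \<epsilon> * N y + \<epsilon>^2 * real t))" .
    have final: "\<bar>G_eps g \<beta> \<epsilon> t x - G_eps g \<beta> \<epsilon> t y\<bar>
        \<le> C1 * \<epsilon> * N (x - y) * exp (C2 * (\<epsilon> * N x + \<epsilon> * N y + \<epsilon>^2 * real t))"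
      by (rule order_trans[OF main bound])
    then show "\<bar>G_eps g \<beta> \<epsilon> t x - G_eps g \<beta> \<epsilon> t y\<bar>
             \<le> C1 * \<epsilon> * norm (lat_emb (x - y))
                * exp (C2 * (\<epsilon> * norm (lat_emb x) + \<epsilon> * norm (lat_emb y) + \<epsilon>^2 * real t))"
      unfolding N_def .
  qed
qed

end
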